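(* Let $R=R_1\times R_2\times R_3$ be a direct product of three finite commutative local rings with identity, and let $I=I_1\times I_2\times I_3$ be an ideal of $R$ with $I_i$ a proper ideal of $R_i$ for $i=1,2,3$. Then $\Gamma''_I(R)$ is planar if and only if $R\cong\mathbb{Z}_2\times\mathbb{Z}_2\times\mathbb{Z}_2$.
   Context: The product has componentwise operations. For a commutative ring $R$ and an ideal $I$ of $R$, $\Gamma''_I(R)$ is the simple undirected graph whose vertex set is $\{x\in R\setminus I : xR+I\neq R\}$, with distinct vertices $x,y$ adjacent if and only if $x\notin yR+I$ and $y\notin xR+I$. A graph is planar if it can be drawn in the plane with edges meeting only at their endpoints. *)

theory Defs
  imports "HOL-Analysis.Analysis" "HOL-Algebra.Algebra"
begin

definition local_ring :: "('a, 'm) ring_scheme \<Rightarrow> bool" where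
  "local_ring R \<longleftrightarrow> cring R \<and> (\<exists>!M. maximalideal M R)"

definition elt_ideal_sum :: "('a, 'm) ring_scheme \<Rightarrow> 'a \<Rightarrow> 'a set \<Rightarrow> 'a set" where
  "elt_ideal_sum R x I = {x \<otimes>\<^bsub>R\<^esub> r \<oplus>\<^bsub>R\<^esub> i | r i. r \<in> carrier R \<and> i \<in> I}"

definition gamma2_verts :: "('a, 'm) ring_scheme \<Rightarrow> 'a set \<Rightarrow> 'a set" where
  "gamma2_verts R I = {x \<in> carrier R - I. elt_ideal_sum R x I \<noteq> carrier R}"

definition gamma2_adj :: "('a, 'm) ring_scheme \<Rightarrow> 'a set \<Rightarrow> 'a \<Rightarrow> 'a \<Rightarrow> bool" where
  "gamma2_adj R I x y \<longleftrightarrow> x \<noteq> y \<and> x \<notin> elt_ideal_sum R y I \<and> y \<notin> elt_ideal_sum R x I"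

text \<open>Planarity of a simple undirected graph with vertex set V and symmetric
  adjacency E: vertices are drawn as distinct points of the plane (complex numbers),
  every edge {u,v} as an arc joining the images of u and v, which meets no other
  vertex point, and two distinct edges only meet in images of common endpoints.\<close>
definition planar_graph :: "'v set \<Rightarrow> ('v \<Rightarrow> 'v \<Rightarrow> bool) \<Rightarrow> bool" where
  "planar_graph V E \<longleftrightarrow>
    (\<exists>(f :: 'v \<Rightarrow> complex) (g :: 'v set \<Rightarrow> real \<Rightarrow> complex).
       inj_on f V \<and>
       (\<forall>u\<in>V. \<forall>v\<in>V. E u v \<longrightarrow>
          arc (g {u, v}) \<and> {pathstart (g {u, v}), pathfinish (g {u, v})} = {f u, f v} \<and>
          path_image (g {u, v}) \<inter> f ` V \<subseteq> {f u, f v}) \<and>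
       (\<forall>u\<in>V. \<forall>v\<in>V. \<forall>u'\<in>V. \<forall>v'\<in>V. E u v \<longrightarrow> E u' v' \<longrightarrow> {u, v} \<noteq> {u', v'} \<longrightarrow>
          path_image (g {u, v}) \<inter> path_image (g {u', v'}) \<subseteq> f ` ({u, v} \<inter> {u', v'})))"

end

theory Submission
  imports Defs
begin


lemma cycle_jordan:
  fixes p q :: "real \<Rightarrow> complex"
  assumes "arc p" "arc q" "pathstart p = a" "pathfinish p = b" "pathstart q = a" "pathfinish q = b"
    and "path_image p \<inter> path_image q = {a,b}"
  shows "inside (path_image p \<union> path_image q) \<noteq> {}"
    "connected (inside (path_image p \<union> path_image q))"
    "connected (outside (path_image p \<union> path_image q))"
    "frontier (inside (path_image p \<union> path_image q)) = path_image p \<union> path_image q"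
proof -
  have sp: "simple_path (p +++ reversepath q)"
    using assms by (auto simp: simple_path_join_loop_eq arc_simple_path simple_path_reversepath)
  have pi: "path_image (p +++ reversepath q) = path_image p \<union> path_image q"
    using assms by (simp add: path_image_join)
  have lp: "pathfinish (p +++ reversepath q) = pathstart (p +++ reversepath q)"
    using assms by simp
  show "inside (path_image p \<union> path_image q) \<noteq> {}"
    "connected (inside (path_image p \<union> path_image q))"
    "connected (outside (path_image p \<union> path_image q))"
    "frontier (inside (path_image p \<union> path_image q)) = path_image p \<union> path_image q"
    using Jordan_inside_outside[OF sp lp] pi by auto
qed

lemma theta_core:
  fixes p1 p2 p3 :: "real \<Rightarrow> complex"
  assumes a1: "arc p1" "pathstart p1 = a" "pathfinish p1 = b"
    and a2: "arc p2" "pathstart p2 = a" "pathfinish p2 = b"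
    and a3: "arc p3" "pathstart p3 = a" "pathfinish p3 = b"
    and ab: "a \<noteq> b"
    and i12: "path_image p1 \<inter> path_image p2 = {a,b}"
    and i13: "path_image p1 \<inter> path_image p3 = {a,b}"
    and i23: "path_image p2 \<inter> path_image p3 = {a,b}"
    and B1: "B1 \<in> path_image p1" and B2: "B2 \<in> path_image p2" and B3: "B3 \<in> path_image p3"
    and B3ab: "B3 \<notin> {a,b}"
    and Q: "connected Q1" "connected Q2" "connected Q3"
    and XX: "XX \<in> Q1" "XX \<in> Q2" "XX \<in> Q3"
    and QB: "B1 \<in> Q1" "B2 \<in> Q2" "B3 \<in> Q3"
    and Q1d: "Q1 \<inter> path_image p2 = {}" "Q1 \<inter> path_image p3 = {}"
    and Q2d: "Q2 \<inter> path_image p1 = {}" "Q2 \<inter> path_image p3 = {}"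
    and Q3d: "Q3 \<inter> path_image p1 = {}" "Q3 \<inter> path_image p2 = {}"
    and in3: "path_image p3 \<inter> inside (path_image p1 \<union> path_image p2) \<noteq> {}"
  shows False
proof -
  let ?P1 = "path_image p1" let ?P2 = "path_image p2" let ?P3 = "path_image p3"
  obtain d: "inside (?P1 \<union> ?P3) \<inter> inside (?P2 \<union> ?P3) = {}"
    and u: "inside (?P1 \<union> ?P3) \<union> inside (?P2 \<union> ?P3) \<union> (?P3 - {a,b}) = inside (?P1 \<union> ?P2)"
    using split_inside_simple_closed_curve[OF arc_imp_simple_path[OF a1(1)] a1(2,3)
        arc_imp_simple_path[OF a2(1)] a2(2,3) arc_imp_simple_path[OF a3(1)] a3(2,3) ab i12 i13 i23 in3]
    by blast
  have B3in: "B3 \<in> inside (?P1 \<union> ?P2)" using u B3 B3ab by blast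
  have Xin: "XX \<in> inside (?P1 \<union> ?P2)"
  proof (rule ccontr)
    assume "XX \<notin> inside (?P1 \<union> ?P2)"
    hence "XX \<in> outside (?P1 \<union> ?P2)" using Q3d XX(3) by (metis ComplI Un_iff disjoint_iff inside_Un_outside)
    hence "(?P1 \<union> ?P2) \<inter> Q3 \<noteq> {}"
      using inside_outside_intersect_connected[OF Q(3)] B3in QB(3) XX(3) by blast
    thus False using Q3d by blast
  qed
  have "XX \<notin> ?P3" using XX(1) Q1d by blast
  hence "XX \<in> inside (?P1 \<union> ?P3) \<or> XX \<in> inside (?P2 \<union> ?P3)" using u Xin by blast
  thus False
  proof
    assume Xi: "XX \<in> inside (?P1 \<union> ?P3)"
    have "B2 \<notin> inside (?P1 \<union> ?P2)" using B2 by (metis UnCI disjoint_iff inside_no_overlap)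
    hence "B2 \<notin> inside (?P1 \<union> ?P3)" using u by blast
    moreover have "B2 \<notin> ?P1 \<union> ?P3" using Q2d QB(2) by blast
    ultimately have "B2 \<in> outside (?P1 \<union> ?P3)" by (metis ComplI inside_Un_outside UnE)
    hence "(?P1 \<union> ?P3) \<inter> Q2 \<noteq> {}"
      using inside_outside_intersect_connected[OF Q(2)] Xi QB(2) XX(2) by blast
    thus False using Q2d by blast
  next
    assume Xi: "XX \<in> inside (?P2 \<union> ?P3)"
    have "B1 \<notin> inside (?P1 \<union> ?P2)" using B1 by (metis UnCI disjoint_iff inside_no_overlap)
    hence "B1 \<notin> inside (?P2 \<union> ?P3)" using u by blast
    moreover have "B1 \<notin> ?P2 \<union> ?P3" using Q1d QB(1) by blast
    ultimately have "B1 \<in> outside (?P2 \<union> ?P3)" by (metis ComplI inside_Un_outside UnE)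
    hence "(?P2 \<union> ?P3) \<inter> Q1 \<noteq> {}"
      using inside_outside_intersect_connected[OF Q(1)] Xi QB(1) XX(1) by blast
    thus False using Q1d by blast
  qed
qed

lemma theta_L:
  fixes p1 p2 p3 :: "real \<Rightarrow> complex"
  assumes a1: "arc p1" "pathstart p1 = a" "pathfinish p1 = b"
    and a2: "arc p2" "pathstart p2 = a" "pathfinish p2 = b"
    and a3: "arc p3" "pathstart p3 = a" "pathfinish p3 = b"
    and ab: "a \<noteq> b"
    and i12: "path_image p1 \<inter> path_image p2 = {a,b}"
    and i13: "path_image p1 \<inter> path_image p3 = {a,b}"
    and i23: "path_image p2 \<inter> path_image p3 = {a,b}"
    and B2: "B2 \<in> path_image p2" and B3: "B3 \<in> path_image p3"
    and Bab: "B2 \<notin> {a,b}" "B3 \<notin> {a,b}"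
    and n1: "path_image p1 \<inter> inside (path_image p2 \<union> path_image p3) = {}"
    and n2: "path_image p2 \<inter> inside (path_image p1 \<union> path_image p3) = {}"
    and n3: "path_image p3 \<inter> inside (path_image p1 \<union> path_image p2) = {}"
  shows False
proof -
  let ?P1 = "path_image p1" let ?P2 = "path_image p2" let ?P3 = "path_image p3"
  note J23 = cycle_jordan[OF a2(1) a3(1) a2(2,3) a3(2,3) i23]
  note J12 = cycle_jordan[OF a1(1) a2(1) a1(2,3) a2(2,3) i12]
  note J13 = cycle_jordan[OF a1(1) a3(1) a1(2,3) a3(2,3) i13]
  obtain w where w: "w \<in> inside (?P2 \<union> ?P3)" using J23(1) by blast
  have wn: "w \<notin> ?P1 \<union> ?P2 \<union> ?P3" using w n1 inside_no_overlap by blast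
  have gen: "w \<in> outside (?P1 \<union> Pj)"
    if pj: "Pj = ?P2 \<or> Pj = ?P3" and Bk: "Bk \<in> ?P2 \<union> ?P3" "Bk \<notin> ?P1 \<union> Pj"
      and nk: "(?P2 \<union> ?P3 - Pj) \<inter> inside (?P1 \<union> Pj) = {}"
      and Bk2: "Bk \<in> ?P2 \<union> ?P3 - Pj"
      and fr: "frontier (inside (?P1 \<union> Pj)) = ?P1 \<union> Pj"
    for Pj Bk
  proof (rule ccontr)
    assume "w \<notin> outside (?P1 \<union> Pj)"
    moreover have "w \<notin> ?P1 \<union> Pj" using wn pj by blast
    ultimately have wi: "w \<in> inside (?P1 \<union> Pj)" by (metis ComplI inside_Un_outside UnE)
    have "inside (?P2 \<union> ?P3) \<subseteq> inside (?P1 \<union> Pj)"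
    proof
      fix z assume z: "z \<in> inside (?P2 \<union> ?P3)"
      have "connected_component (- (?P1 \<union> Pj)) w z"
        unfolding connected_component_def
        apply (rule exI[of _ "inside (?P2 \<union> ?P3)"])
        using J23(2) w z n1 inside_no_overlap pj by blast
      thus "z \<in> inside (?P1 \<union> Pj)" using inside_same_component wi by blast
    qed
    hence "closure (inside (?P2 \<union> ?P3)) \<subseteq> closure (inside (?P1 \<union> Pj))" by (rule closure_mono)
    also have "\<dots> = inside (?P1 \<union> Pj) \<union> (?P1 \<union> Pj)" using fr by (simp add: closure_Un_frontier)
    finally have "Bk \<in> inside (?P1 \<union> Pj) \<union> (?P1 \<union> Pj)"
      using Bk(1) J23(4) closure_Un_frontier by blast
    thus False using Bk nk Bk2 by blast
  qed
  have o12: "w \<in> outside (?P1 \<union> ?P2)"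
    apply (rule gen[of ?P2 B3])
    using B3 Bab i13 i23 n3 J12(4) by auto
  have o13: "w \<in> outside (?P1 \<union> ?P3)"
    apply (rule gen[of ?P3 B2])
    using B2 Bab i12 i23 n2 J13(4) by auto
  have bnd: "bounded (?P1 \<union> ?P2 \<union> ?P3)"
    using a1 a2 a3 by (simp add: bounded_arc_image)
  obtain v where v: "v \<in> outside (?P1 \<union> ?P2 \<union> ?P3)"
    using outside_bounded_nonempty[OF bnd] by blast
  have v12: "v \<in> outside (?P1 \<union> ?P2)" and v13: "v \<in> outside (?P1 \<union> ?P3)"
    and v23: "v \<in> outside (?P2 \<union> ?P3)"
    using v outside_mono[of "?P1 \<union> ?P2" "?P1 \<union> ?P2 \<union> ?P3"] outside_mono[of "?P1 \<union> ?P3" "?P1 \<union> ?P2 \<union> ?P3"]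
      outside_mono[of "?P2 \<union> ?P3" "?P1 \<union> ?P2 \<union> ?P3"] by blast+
  have c12: "connected_component (- (?P1 \<union> ?P2)) w v"
    unfolding connected_component_def
    apply (rule exI[of _ "outside (?P1 \<union> ?P2)"])
    using J12(3) o12 v12 outside_no_overlap by blast
  have c13: "connected_component (- (?P1 \<union> ?P3)) w v"
    unfolding connected_component_def
    apply (rule exI[of _ "outside (?P1 \<union> ?P3)"])
    using J13(3) o13 v13 outside_no_overlap by blast
  have int: "(?P1 \<union> ?P2) \<inter> (?P1 \<union> ?P3) = ?P1"
  proof -
    have "a \<in> ?P1" "b \<in> ?P1" using a1(2,3) pathstart_in_path_image pathfinish_in_path_image by metis+
    thus ?thesis using i23 by (metis Int_absorb Int_commute Un_Int_distrib Un_absorb2 insert_subset empty_subsetI)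
  qed
  have "connected_component (- ((?P1 \<union> ?P2) \<union> (?P1 \<union> ?P3))) w v"
    apply (rule Janiszewski)
    using a1 a2 a3 c12 c13 int
    by (auto simp: compact_arc_image closed_arc_image connected_arc_image intro!: compact_Un closed_Un)
  hence "connected_component (- (?P2 \<union> ?P3)) w v"
    by (rule connected_component_of_subset) blast
  hence "v \<in> inside (?P2 \<union> ?P3)" using inside_same_component w by blast
  thus False using v23 inside_Int_outside by blast
qed

lemma theta_full:
  fixes p1 p2 p3 :: "real \<Rightarrow> complex"
  assumes a1: "arc p1" "pathstart p1 = a" "pathfinish p1 = b"
    and a2: "arc p2" "pathstart p2 = a" "pathfinish p2 = b"
    and a3: "arc p3" "pathstart p3 = a" "pathfinish p3 = b"
    and ab: "a \<noteq> b"
    and i12: "path_image p1 \<inter> path_image p2 = {a,b}"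
    and i13: "path_image p1 \<inter> path_image p3 = {a,b}"
    and i23: "path_image p2 \<inter> path_image p3 = {a,b}"
    and B1: "B1 \<in> path_image p1" and B2: "B2 \<in> path_image p2" and B3: "B3 \<in> path_image p3"
    and Bab: "B1 \<notin> {a,b}" "B2 \<notin> {a,b}" "B3 \<notin> {a,b}"
    and Q: "connected Q1" "connected Q2" "connected Q3"
    and XX: "XX \<in> Q1" "XX \<in> Q2" "XX \<in> Q3"
    and QB: "B1 \<in> Q1" "B2 \<in> Q2" "B3 \<in> Q3"
    and Q1d: "Q1 \<inter> path_image p2 = {}" "Q1 \<inter> path_image p3 = {}"
    and Q2d: "Q2 \<inter> path_image p1 = {}" "Q2 \<inter> path_image p3 = {}"
    and Q3d: "Q3 \<inter> path_image p1 = {}" "Q3 \<inter> path_image p2 = {}"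
  shows False
proof (cases "path_image p3 \<inter> inside (path_image p1 \<union> path_image p2) = {}")
  case n3: True
  show False
  proof (cases "path_image p2 \<inter> inside (path_image p1 \<union> path_image p3) = {}")
    case n2: True
    show False
    proof (cases "path_image p1 \<inter> inside (path_image p2 \<union> path_image p3) = {}")
      case n1: True
      show False
        by (rule theta_L[OF a1 a2 a3 ab i12 i13 i23 B2 B3 Bab(2,3) n1 n2 n3])
    next
      case False
      show False
        apply (rule theta_core[OF a2 a3 a1 ab i23 _ _ B2 B3 B1 Bab(1) Q(2,3,1) XX(2,3,1) QB(2,3,1)])
        using i12 i13 Q1d Q2d Q3d False by (auto simp: Int_commute Un_commute)
    qed
  next
    case False
    show False
      apply (rule theta_core[OF a1 a3 a2 ab i13 i12 _ B1 B3 B2 Bab(2) Q(1,3,2) XX(1,3,2) QB(1,3,2)])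
      using i23 Q1d Q2d Q3d False by (auto simp: Int_commute Un_commute)
  qed
next
  case False
  show False
    by (rule theta_core[OF a1 a2 a3 ab i12 i13 i23 B1 B2 B3 Bab(3) Q XX QB Q1d Q2d Q3d False])
qed


definition og :: "('v \<Rightarrow> complex) \<Rightarrow> ('v set \<Rightarrow> real \<Rightarrow> complex) \<Rightarrow> 'v \<Rightarrow> 'v \<Rightarrow> real \<Rightarrow> complex" where
  "og f g x y = (if pathstart (g {x,y}) = f x then g {x,y} else reversepath (g {x,y}))"

lemma og_props:
  assumes "arc (g {x,y})" "{pathstart (g {x, y}), pathfinish (g {x, y})} = {f x, f y}"
  shows "arc (og f g x y)" "pathstart (og f g x y) = f x" "pathfinish (og f g x y) = f y"
    "path_image (og f g x y) = path_image (g {x,y})"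
  using assms by (auto simp: og_def doubleton_eq_iff arc_reversepath path_image_reversepath)

lemma K33_nonplanar:
  assumes P: "planar_graph V E"
    and V: "a1 \<in> V" "a2 \<in> V" "a3 \<in> V" "b1 \<in> V" "b2 \<in> V" "b3 \<in> V"
    and D: "distinct [a1,a2,a3,b1,b2,b3]"
    and E: "E a1 b1" "E a1 b2" "E a1 b3" "E a2 b1" "E a2 b2" "E a2 b3" "E a3 b1" "E a3 b2" "E a3 b3"
  shows False
proof -
  obtain f :: "_ \<Rightarrow> complex" and g where
    inj: "inj_on f V" and
    ed0: "\<forall>u\<in>V. \<forall>v\<in>V. E u v \<longrightarrow>
          arc (g {u, v}) \<and> {pathstart (g {u, v}), pathfinish (g {u, v})} = {f u, f v} \<and>
          path_image (g {u, v}) \<inter> f ` V \<subseteq> {f u, f v}" and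
    cr0: "\<forall>u\<in>V. \<forall>v\<in>V. \<forall>u'\<in>V. \<forall>v'\<in>V. E u v \<longrightarrow> E u' v' \<longrightarrow> {u, v} \<noteq> {u', v'} \<longrightarrow>
          path_image (g {u, v}) \<inter> path_image (g {u', v'}) \<subseteq> f ` ({u, v} \<inter> {u', v'})"
    using P unfolding planar_graph_def by (elim exE conjE) (rule that)
  have ed: "arc (g {u, v})" "{pathstart (g {u, v}), pathfinish (g {u, v})} = {f u, f v}"
     if "u\<in>V" "v\<in>V" "E u v" for u v
    using ed0 that by simp_all
  have cr: "path_image (g {u, v}) \<inter> path_image (g {u', v'}) \<subseteq> f ` ({u, v} \<inter> {u', v'})"
    if "u\<in>V" "v\<in>V" "u'\<in>V" "v'\<in>V" "E u v" "E u' v'" "{u, v} \<noteq> {u', v'}" for u v u' v'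
    by (rule cr0[rule_format, OF that])
  define G where "G x y = path_image (g {x,y})" for x y
  define oa where "oa x y = og f g x y" for x y
  have oP: "arc (oa x y) \<and> pathstart (oa x y) = f x \<and> pathfinish (oa x y) = f y \<and> path_image (oa x y) = G x y"
    if "x \<in> V" "y \<in> V" "E x y" for x y
    using og_props[of g x y f, OF ed[OF that]] unfolding oa_def G_def by simp
  have fd: "distinct [f a1, f a2, f a3, f b1, f b2, f b3]"
  proof -
    have "distinct (map f [a1,a2,a3,b1,b2,b3])"
      apply (rule distinct_map[THEN iffD2]) using D inj_on_subset[OF inj, of "{a1,a2,a3,b1,b2,b3}"] V by simp
    thus ?thesis by simp
  qed
  have Gs: "G x y = G y x" for x y unfolding G_def by (simp add: insert_commute)
  have crG: "G u v \<inter> G u' v' \<subseteq> f ` ({u, v} \<inter> {u', v'})"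
    if "u\<in>V" "v\<in>V" "u'\<in>V" "v'\<in>V" "E u v" "E u' v'" "{u, v} \<noteq> {u', v'}" for u v u' v'
    using cr[OF that] unfolding G_def .
  have GA: "f x \<in> G x y" "f y \<in> G x y" if "x \<in> V" "y \<in> V" "E x y" for x y
    using oP[OF that] pathstart_in_path_image pathfinish_in_path_image by metis+
  define p where "p b = oa a1 b +++ reversepath (oa a2 b)" for b
  have pP: "arc (p b) \<and> pathstart (p b) = f a1 \<and> pathfinish (p b) = f a2 \<and> path_image (p b) = G a1 b \<union> G a2 b"
    if "b \<in> V" "E a1 b" "E a2 b" "b \<noteq> a1" "b \<noteq> a2" for b
  proof -
    have o1: "arc (oa a1 b)" "pathstart (oa a1 b) = f a1" "pathfinish (oa a1 b) = f b" "path_image (oa a1 b) = G a1 b"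
      using oP[OF V(1) that(1,2)] by auto
    have o2: "arc (oa a2 b)" "pathstart (oa a2 b) = f a2" "pathfinish (oa a2 b) = f b" "path_image (oa a2 b) = G a2 b"
      using oP[OF V(2) that(1,3)] by auto
    have "{a1, b} \<noteq> {a2, b}" using D that by (auto simp: doubleton_eq_iff)
    hence "G a1 b \<inter> G a2 b \<subseteq> f ` ({a1, b} \<inter> {a2, b})" apply (intro crG) using V that by simp_all
    also have "{a1, b} \<inter> {a2, b} = {b}" using D that by auto
    finally have int: "G a1 b \<inter> G a2 b \<subseteq> {f b}" by simp
    have "arc (p b)" unfolding p_def
      apply (rule arc_join)
      using o1 o2 int by (auto simp: arc_reversepath path_image_reversepath)
    thus ?thesis using o1 o2 unfolding p_def by (simp add: path_image_join)
  qed
  have p1: "arc (p b1) \<and> pathstart (p b1) = f a1 \<and> pathfinish (p b1) = f a2 \<and> path_image (p b1) = G a1 b1 \<union> G a2 b1"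
    using pP[of b1] V E D by auto
  have p2: "arc (p b2) \<and> pathstart (p b2) = f a1 \<and> pathfinish (p b2) = f a2 \<and> path_image (p b2) = G a1 b2 \<union> G a2 b2"
    using pP[of b2] V E D by auto
  have p3: "arc (p b3) \<and> pathstart (p b3) = f a1 \<and> pathfinish (p b3) = f a2 \<and> path_image (p b3) = G a1 b3 \<union> G a2 b3"
    using pP[of b3] V E D by auto
  have pint: "(G a1 b \<union> G a2 b) \<inter> (G a1 b' \<union> G a2 b') = {f a1, f a2}"
    if "b \<in> V" "b' \<in> V" "E a1 b" "E a2 b" "E a1 b'" "E a2 b'" "distinct [a1,a2,b,b']" for b b'
  proof -
    have "G a1 b \<inter> G a1 b' \<subseteq> f ` ({a1, b} \<inter> {a1, b'})" apply (rule crG) using V that by (simp_all add: doubleton_eq_iff)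
    moreover have "G a1 b \<inter> G a2 b' \<subseteq> f ` ({a1, b} \<inter> {a2, b'})" apply (rule crG) using V that by (simp_all add: doubleton_eq_iff)
    moreover have "G a2 b \<inter> G a1 b' \<subseteq> f ` ({a2, b} \<inter> {a1, b'})" apply (rule crG) using V that by (simp_all add: doubleton_eq_iff)
    moreover have "G a2 b \<inter> G a2 b' \<subseteq> f ` ({a2, b} \<inter> {a2, b'})" apply (rule crG) using V that by (simp_all add: doubleton_eq_iff)
    moreover have "{a1, b} \<inter> {a1, b'} = {a1}" "{a1, b} \<inter> {a2, b'} = {}" "{a2, b} \<inter> {a1, b'} = {}"
      "{a2, b} \<inter> {a2, b'} = {a2}" using that by auto
    moreover have "f a1 \<in> G a1 b" "f a1 \<in> G a1 b'" "f a2 \<in> G a2 b" "f a2 \<in> G a2 b'"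
      using GA V that by auto
    ultimately show ?thesis by auto
  qed
  have qd: "G a3 b \<inter> (G a1 b' \<union> G a2 b') = {}"
    if "b \<in> V" "b' \<in> V" "E a3 b" "E a1 b'" "E a2 b'" "distinct [a1,a2,a3,b,b']" for b b'
  proof -
    have "G a3 b \<inter> G a1 b' \<subseteq> f ` ({a3, b} \<inter> {a1, b'})" apply (rule crG) using V that by (simp_all add: doubleton_eq_iff)
    moreover have "G a3 b \<inter> G a2 b' \<subseteq> f ` ({a3, b} \<inter> {a2, b'})" apply (rule crG) using V that by (simp_all add: doubleton_eq_iff)
    moreover have "{a3, b} \<inter> {a1, b'} = {}" "{a3, b} \<inter> {a2, b'} = {}" using that by auto
    ultimately show ?thesis by auto
  qed
  have Bn: "f b1 \<notin> {f a1, f a2}" "f b2 \<notin> {f a1, f a2}" "f b3 \<notin> {f a1, f a2}" using fd by auto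
  have i12: "path_image (p b1) \<inter> path_image (p b2) = {f a1, f a2}"
    using p1 p2 pint[of b1 b2] V E D by simp
  have i13: "path_image (p b1) \<inter> path_image (p b3) = {f a1, f a2}"
    using p1 p3 pint[of b1 b3] V E D by simp
  have i23: "path_image (p b2) \<inter> path_image (p b3) = {f a1, f a2}"
    using p2 p3 pint[of b2 b3] V E D by simp
  have Bi: "f b1 \<in> path_image (p b1)" "f b2 \<in> path_image (p b2)" "f b3 \<in> path_image (p b3)"
    using p1 p2 p3 GA(2)[OF V(1) V(4) E(1)] GA(2)[OF V(1) V(5) E(2)] GA(2)[OF V(1) V(6) E(3)] by simp_all
  have Qc: "connected (G a3 b1)" "connected (G a3 b2)" "connected (G a3 b3)"
    using oP[OF V(3) V(4) E(7)] oP[OF V(3) V(5) E(8)] oP[OF V(3) V(6) E(9)] by (metis connected_arc_image)+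
  have QX: "f a3 \<in> G a3 b1" "f a3 \<in> G a3 b2" "f a3 \<in> G a3 b3"
    and QB: "f b1 \<in> G a3 b1" "f b2 \<in> G a3 b2" "f b3 \<in> G a3 b3"
    using GA[OF V(3) V(4) E(7)] GA[OF V(3) V(5) E(8)] GA[OF V(3) V(6) E(9)] by simp_all
  have Q1d: "G a3 b1 \<inter> path_image (p b2) = {}" "G a3 b1 \<inter> path_image (p b3) = {}"
    using qd[of b1 b2] qd[of b1 b3] p2 p3 V E D by auto
  have Q2d: "G a3 b2 \<inter> path_image (p b1) = {}" "G a3 b2 \<inter> path_image (p b3) = {}"
    using qd[of b2 b1] qd[of b2 b3] p1 p3 V E D by auto
  have Q3d: "G a3 b3 \<inter> path_image (p b1) = {}" "G a3 b3 \<inter> path_image (p b2) = {}"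
    using qd[of b3 b1] qd[of b3 b2] p1 p2 V E D by auto
  have fa: "f a1 \<noteq> f a2" using fd by simp
  show False
    apply (rule theta_full[OF _ _ _ _ _ _ _ _ _ fa i12 i13 i23 Bi Bn Qc QX QB Q1d Q2d Q3d])
    using p1 p2 p3 by simp_all
qed

definition pt :: "bool \<times> bool \<times> bool \<Rightarrow> complex" where
  "pt s = (if s = (True,False,False) then Complex 0 0 else
           if s = (False,True,False) then Complex 6 0 else
           if s = (False,False,True) then Complex 0 6 else
           if s = (False,True,True) then Complex 1 1 else
           if s = (True,False,True) then Complex 3 1 else
           if s = (True,True,False) then Complex 1 3 else 0)"

definition EL :: "((bool \<times> bool \<times> bool) \<times> (bool \<times> bool \<times> bool)) list" where
  "EL = [((True,False,False),(False,True,False)), ((True,False,False),(False,False,True)),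
         ((False,True,False),(False,False,True)), ((False,True,True),(True,False,True)),
         ((False,True,True),(True,True,False)), ((True,False,True),(True,True,False)),
         ((True,False,False),(False,True,True)), ((False,True,False),(True,False,True)),
         ((False,False,True),(True,True,False))]"

lemma EL_cross:
  "list_all (\<lambda>(a,b). list_all (\<lambda>(c,d). (a,b) = (c,d) \<or>
      closed_segment (pt a) (pt b) \<inter> closed_segment (pt c) (pt d) \<subseteq> pt ` ({a,b} \<inter> {c,d})) EL) EL"
  unfolding EL_def
  apply (simp only: list_all_iff list.set ball_simps prod.case)
  apply (intro conjI)
  apply (simp_all add: pt_def)
  apply (auto simp: closed_segment_def complex_eq_iff scaleR_conv_of_real algebra_simps)
  done
definition S6L :: "(bool \<times> bool \<times> bool) list" where
  "S6L = [(True,False,False),(False,True,False),(False,False,True),(False,True,True),(True,False,True),(True,True,False)]"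

lemma EL_vert:
  "list_all (\<lambda>(a,b). list_all (\<lambda>w. w = a \<or> w = b \<or> pt w \<notin> closed_segment (pt a) (pt b)) S6L) EL"
  unfolding EL_def S6L_def
  apply (simp only: list_all_iff list.set ball_simps prod.case)
  apply (intro conjI)
  apply (simp_all add: pt_def)
  apply (auto simp: closed_segment_def complex_eq_iff scaleR_conv_of_real algebra_simps)
  done

definition le3 :: "bool \<times> bool \<times> bool \<Rightarrow> bool \<times> bool \<times> bool \<Rightarrow> bool" where
  "le3 p q = ((fst p \<longrightarrow> fst q) \<and> (fst (snd p) \<longrightarrow> fst (snd q)) \<and> (snd (snd p) \<longrightarrow> snd (snd q)))"

definition inc3 :: "bool \<times> bool \<times> bool \<Rightarrow> bool \<times> bool \<times> bool \<Rightarrow> bool" where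
  "inc3 p q \<longleftrightarrow> \<not> le3 p q \<and> \<not> le3 q p"

lemma inc3_EL: "p \<in> set S6L \<Longrightarrow> q \<in> set S6L \<Longrightarrow> inc3 p q \<Longrightarrow> (p,q) \<in> set EL \<or> (q,p) \<in> set EL"
  unfolding S6L_def EL_def inc3_def le3_def by (simp only: list.set insert_iff empty_iff) (elim disjE; simp)

lemma pt_inj: "inj_on pt (set S6L)"
  unfolding inj_on_def S6L_def by (auto simp: pt_def complex_eq_iff)

lemma inc3_neq: "inc3 p q \<Longrightarrow> p \<noteq> q"
  unfolding inc3_def le3_def by auto

lemma GL:
  assumes "p \<in> set S6L" "q \<in> set S6L" "p' \<in> set S6L" "q' \<in> set S6L" "inc3 p q" "inc3 p' q'" "{p,q} \<noteq> {p',q'}"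
  shows "closed_segment (pt p) (pt q) \<inter> closed_segment (pt p') (pt q') \<subseteq> pt ` ({p,q} \<inter> {p',q'})"
proof -
  obtain a b where ab: "(a,b) \<in> set EL" "{a,b} = {p,q}" "closed_segment (pt a) (pt b) = closed_segment (pt p) (pt q)"
    using inc3_EL[OF assms(1,2,5)] apply (elim disjE)
    apply (rule that[of p q]; simp)
    apply (rule that[of q p]; auto simp: closed_segment_commute insert_commute)
    done
  obtain c d where cd: "(c,d) \<in> set EL" "{c,d} = {p',q'}" "closed_segment (pt c) (pt d) = closed_segment (pt p') (pt q')"
    using inc3_EL[OF assms(3,4,6)] apply (elim disjE)
    apply (rule that[of p' q']; simp)
    apply (rule that[of q' p']; auto simp: closed_segment_commute insert_commute)
    done
  have "(a,b) \<noteq> (c,d)" using ab cd assms(7) by auto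
  hence "closed_segment (pt a) (pt b) \<inter> closed_segment (pt c) (pt d) \<subseteq> pt ` ({a,b} \<inter> {c,d})"
    using EL_cross ab(1) cd(1) unfolding list_all_iff by fastforce
  thus ?thesis using ab cd by simp
qed

lemma GV:
  assumes "p \<in> set S6L" "q \<in> set S6L" "w \<in> set S6L" "inc3 p q" "pt w \<in> closed_segment (pt p) (pt q)"
  shows "w = p \<or> w = q"
proof -
  obtain a b where ab: "(a,b) \<in> set EL" "{a,b} = {p,q}" "closed_segment (pt a) (pt b) = closed_segment (pt p) (pt q)"
    using inc3_EL[OF assms(1,2,4)] apply (elim disjE)
    apply (rule that[of p q]; simp)
    apply (rule that[of q p]; auto simp: closed_segment_commute insert_commute)
    done
  have "w = a \<or> w = b \<or> pt w \<notin> closed_segment (pt a) (pt b)"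
    using EL_vert ab(1) assms(3) unfolding list_all_iff by fastforce
  thus ?thesis using ab assms(5) by (auto simp: doubleton_eq_iff)
qed

lemma prism_planar:
  fixes s :: "'v \<Rightarrow> bool \<times> bool \<times> bool"
  assumes inj: "inj_on s V" and sV: "s ` V \<subseteq> set S6L"
    and E: "\<And>x y. x \<in> V \<Longrightarrow> y \<in> V \<Longrightarrow> E x y \<Longrightarrow> inc3 (s x) (s y)"
  shows "planar_graph V E"
proof -
  define f where "f x = pt (s x)" for x
  define fst' where "fst' e = (SOME x. x \<in> e)" for e :: "'v set"
  define snd' where "snd' e = (SOME y. y \<in> e \<and> y \<noteq> fst' e)" for e :: "'v set"
  define g where "g e = linepath (f (fst' e)) (f (snd' e))" for e
  have fs: "{fst' {u,v}, snd' {u,v}} = {u,v}" if "u \<noteq> v" for u v :: 'v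
  proof -
    have 1: "fst' {u,v} \<in> {u,v}" unfolding fst'_def by (rule someI_ex) auto
    have "\<exists>y. y \<in> {u,v} \<and> y \<noteq> fst' {u,v}" using 1 that by auto
    hence 2: "snd' {u,v} \<in> {u,v} \<and> snd' {u,v} \<noteq> fst' {u,v}" unfolding snd'_def by (rule someI_ex)
    show ?thesis using 1 2 by auto
  qed
  have sS: "s x \<in> set S6L" if "x \<in> V" for x using sV that by blast
  have "inj_on (pt \<circ> s) V" by (rule comp_inj_on[OF inj inj_on_subset[OF pt_inj sV]])
  hence finj: "inj_on f V" by (simp add: inj_on_def f_def)
  have seg: "path_image (g {u,v}) = closed_segment (f u) (f v)"
    "{pathstart (g {u, v}), pathfinish (g {u, v})} = {f u, f v}" if "u \<noteq> v" for u v
  proof -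
    have "fst' {u,v} = u \<and> snd' {u,v} = v \<or> fst' {u,v} = v \<and> snd' {u,v} = u"
      using fs[OF that] that by (auto simp: doubleton_eq_iff)
    thus "path_image (g {u,v}) = closed_segment (f u) (f v)"
      "{pathstart (g {u, v}), pathfinish (g {u, v})} = {f u, f v}"
      unfolding g_def by (auto simp: closed_segment_commute)
  qed
  have ne: "u \<noteq> v" "s u \<noteq> s v" "f u \<noteq> f v" if "u \<in> V" "v \<in> V" "E u v" for u v
  proof -
    show "s u \<noteq> s v" using inc3_neq[OF E[OF that]] .
    thus "u \<noteq> v" by blast
    show "f u \<noteq> f v" using \<open>s u \<noteq> s v\<close> inj_on_eq_iff[OF pt_inj sS[OF that(1)] sS[OF that(2)]] unfolding f_def by simp
  qed
  show ?thesis
    unfolding planar_graph_def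
  proof (intro exI conjI ballI impI)
    show "inj_on f V" by (rule finj)
  next
    fix u v assume uv: "u \<in> V" "v \<in> V" "E u v"
    have "g {u,v} = linepath (f (fst' {u,v})) (f (snd' {u,v}))" by (simp add: g_def)
    moreover have "f (fst' {u,v}) \<noteq> f (snd' {u,v})"
      using fs[OF ne(1)[OF uv]] ne(3)[OF uv] by (auto simp: doubleton_eq_iff)
    ultimately show "arc (g {u,v})" by simp
    show "{pathstart (g {u, v}), pathfinish (g {u, v})} = {f u, f v}" using seg(2)[OF ne(1)[OF uv]] .
    show "path_image (g {u, v}) \<inter> f ` V \<subseteq> {f u, f v}"
    proof
      fix z assume z: "z \<in> path_image (g {u, v}) \<inter> f ` V"
      then obtain w where w: "w \<in> V" "z = f w" by blast
      have "pt (s w) \<in> closed_segment (pt (s u)) (pt (s v))"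
        using z w seg(1)[OF ne(1)[OF uv]] unfolding f_def by simp
      hence "s w = s u \<or> s w = s v" by (rule GV[OF sS[OF uv(1)] sS[OF uv(2)] sS[OF w(1)] E[OF uv]])
      thus "z \<in> {f u, f v}" using w unfolding f_def by auto
    qed
  next
    fix u v u' v' assume uv: "u \<in> V" "v \<in> V" "u' \<in> V" "v' \<in> V" "E u v" "E u' v'" "{u, v} \<noteq> {u', v'}"
    have n: "{s u, s v} \<noteq> {s u', s v'}"
      using uv inj by (auto simp: doubleton_eq_iff inj_on_eq_iff)
    have "closed_segment (pt (s u)) (pt (s v)) \<inter> closed_segment (pt (s u')) (pt (s v')) \<subseteq> pt ` ({s u, s v} \<inter> {s u', s v'})"
      by (rule GL[OF sS[OF uv(1)] sS[OF uv(2)] sS[OF uv(3)] sS[OF uv(4)] E[OF uv(1,2,5)] E[OF uv(3,4,6)] n])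
    also have "{s u, s v} \<inter> {s u', s v'} = s ` ({u, v} \<inter> {u', v'})"
      using uv inj by (auto simp: inj_on_eq_iff)
    finally show "path_image (g {u, v}) \<inter> path_image (g {u', v'}) \<subseteq> f ` ({u, v} \<inter> {u', v'})"
      using seg(1)[OF ne(1)[OF uv(1,2,5)]] seg(1)[OF ne(1)[OF uv(3,4,6)]] unfolding f_def by (simp add: image_image)
  qed
qed




lemma RDP_simps:
  "(a,b) \<otimes>\<^bsub>RDirProd R S\<^esub> (c,d) = (a \<otimes>\<^bsub>R\<^esub> c, b \<otimes>\<^bsub>S\<^esub> d)"
  "(a,b) \<oplus>\<^bsub>RDirProd R S\<^esub> (c,d) = (a \<oplus>\<^bsub>R\<^esub> c, b \<oplus>\<^bsub>S\<^esub> d)"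
  "\<one>\<^bsub>RDirProd R S\<^esub> = (\<one>\<^bsub>R\<^esub>, \<one>\<^bsub>S\<^esub>)"
  "\<zero>\<^bsub>RDirProd R S\<^esub> = (\<zero>\<^bsub>R\<^esub>, \<zero>\<^bsub>S\<^esub>)"
  by (simp_all add: RDirProd_def DirProd_def monoid.defs)

lemma (in cring) coord_sum:
  assumes J: "ideal J R" and s: "s \<in> carrier R" and t: "t \<in> carrier R"
    and tg: "t \<in> J \<or> t \<in> Units R"
  shows "(\<exists>r\<in>carrier R. \<exists>i\<in>J. s = t \<otimes> r \<oplus> i) \<longleftrightarrow> (s \<notin> J \<longrightarrow> t \<notin> J)"
proof -
  interpret J: ideal J R by (rule J)
  show ?thesis
  proof
    assume "\<exists>r\<in>carrier R. \<exists>i\<in>J. s = t \<otimes> r \<oplus> i"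
    then obtain r i where r: "r \<in> carrier R" "i \<in> J" "s = t \<otimes> r \<oplus> i" by blast
    show "s \<notin> J \<longrightarrow> t \<notin> J"
    proof (intro impI)
      assume "s \<notin> J"
      show "t \<notin> J"
      proof
        assume "t \<in> J"
        hence "t \<otimes> r \<in> J" using r by (simp add: J.I_r_closed)
        hence "s \<in> J" using r by (simp add: J.a_closed)
        thus False using \<open>s \<notin> J\<close> by blast
      qed
    qed
  next
    assume h: "s \<notin> J \<longrightarrow> t \<notin> J"
    show "\<exists>r\<in>carrier R. \<exists>i\<in>J. s = t \<otimes> r \<oplus> i"
    proof (cases "s \<in> J")
      case True
      have "s = t \<otimes> \<zero> \<oplus> s" using s t True by simp
      thus ?thesis using True by blast
    next
      case False
      hence tu: "t \<in> Units R" using h tg by blast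
      have "s = t \<otimes> (inv t \<otimes> s) \<oplus> \<zero>"
        using tu s t by (simp add: m_assoc[symmetric] Units_r_inv)
      moreover have "\<zero> \<in> J" by (rule additive_subgroup.zero_closed[OF ideal.axioms(1)[OF J]])
      ultimately show ?thesis using tu s by (meson Units_inv_closed m_closed)
    qed
  qed
qed

lemma (in cring) exists_max:
  assumes fin: "finite (carrier R)" and J: "ideal J R" "J \<noteq> carrier R"
  shows "\<exists>M. maximalideal M R \<and> J \<subseteq> M"
proof -
  define S where "S = {K. ideal K R \<and> J \<subseteq> K \<and> K \<noteq> carrier R}"
  have "S \<subseteq> Pow (carrier R)" unfolding S_def using ideal.axioms(1) additive_subgroup.a_subset by blast
  hence finS: "finite S" using fin by (meson finite_Pow_iff finite_subset)
  have "J \<in> S" unfolding S_def using J by blast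
  then obtain M where M: "M \<in> S" "J \<subseteq> M" "\<forall>b\<in>S. M \<subseteq> b \<longrightarrow> M = b"
    using finite_has_maximal2[OF finS] by blast
  have "maximalideal M R"
  proof (rule maximalidealI)
    show "ideal M R" "carrier R \<noteq> M" using M(1) unfolding S_def by auto
    fix K assume K: "ideal K R" "M \<subseteq> K" "K \<subseteq> carrier R"
    show "K = M \<or> K = carrier R"
    proof (cases "K = carrier R")
      case False
      hence "K \<in> S" unfolding S_def using K M(2) by auto
      thus ?thesis using M(3) K(2) by auto
    qed simp
  qed
  thus ?thesis using M(2) by blast
qed

lemma (in ideal) unit_not_in:
  assumes "I \<noteq> carrier R" "u \<in> Units R" shows "u \<notin> I"
proof
  assume "u \<in> I"
  hence "\<one> \<in> I" using I_l_closed[OF \<open>u \<in> I\<close> Units_inv_closed[OF assms(2)]] assms(2) by simp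
  thus False using one_imp_carrier assms by blast
qed

lemma (in cring) nonunit_in_max:
  assumes loc: "local_ring R" and fin: "finite (carrier R)" and M: "maximalideal M R"
    and x: "x \<in> carrier R" "x \<notin> Units R"
  shows "x \<in> M"
proof -
  have id: "ideal (PIdl x) R" using cgenideal_ideal[OF x(1)] .
  have "PIdl x \<noteq> carrier R"
  proof
    assume "PIdl x = carrier R"
    hence "\<one> \<in> PIdl x" by simp
    then obtain r where r: "r \<in> carrier R" "\<one> = r \<otimes> x" unfolding cgenideal_def by blast
    hence "x \<in> Units R" using x(1) m_comm[OF r(1) x(1)] unfolding Units_def by auto
    thus False using x by blast
  qed
  then obtain M' where M': "maximalideal M' R" "PIdl x \<subseteq> M'" using exists_max[OF fin id] by blast
  have "M' = M" using loc M M'(1) unfolding local_ring_def by blast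
  thus ?thesis using M' cgenideal_self[OF x(1)] by blast
qed

lemma (in cring) local_unit_add:
  assumes loc: "local_ring R" and fin: "finite (carrier R)" and J: "ideal J R" "J \<noteq> carrier R"
    and u: "u \<in> Units R" and i: "i \<in> J"
  shows "u \<oplus> i \<in> Units R"
proof (rule ccontr)
  assume nu: "u \<oplus> i \<notin> Units R"
  obtain M where M: "maximalideal M R" "J \<subseteq> M" using exists_max[OF fin J] by blast
  have ic: "i \<in> carrier R" using i J(1) ideal.axioms(1) additive_subgroup.a_subset by blast
  have uc: "u \<in> carrier R" using u by blast
  have "u \<oplus> i \<in> M" using nonunit_in_max[OF loc fin M(1)] nu uc ic by simp
  moreover have "i \<in> M" using M(2) i by blast
  ultimately have "(u \<oplus> i) \<ominus> i \<in> M" unfolding a_minus_def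
    using additive_subgroup.a_closed[OF ideal.axioms(1)[OF maximalideal.axioms(1)[OF M(1)]]]
      additive_subgroup.a_inv_closed[OF ideal.axioms(1)[OF maximalideal.axioms(1)[OF M(1)]]] by blast
  moreover have "(u \<oplus> i) \<ominus> i = u" using uc ic by (simp add: a_minus_def a_assoc r_neg)
  ultimately have "u \<in> M" by simp
  thus False using ideal.unit_not_in[OF maximalideal.axioms(1)[OF M(1)] _ u] maximalideal.I_notcarr[OF M(1)] by blast
qed

lemma (in cring) local_units_one:
  assumes loc: "local_ring R" and fin: "finite (carrier R)" and U: "Units R = {\<one>}"
  shows "carrier R \<subseteq> {\<zero>, \<one>}"
proof
  fix x assume x: "x \<in> carrier R"
  show "x \<in> {\<zero>, \<one>}"
  proof (rule ccontr)
    assume "x \<notin> {\<zero>, \<one>}"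
    hence nu: "x \<notin> Units R" and x0: "x \<noteq> \<zero>" using U by auto
    obtain M where M: "maximalideal M R" using loc unfolding local_ring_def by blast
    have xM: "x \<in> M" using nonunit_in_max[OF loc fin M x nu] .
    have "\<one> \<oplus> x \<notin> Units R"
    proof
      assume "\<one> \<oplus> x \<in> Units R"
      hence "\<one> \<oplus> x = \<one>" using U by blast
      hence "x = \<zero>" using x by (metis l_zero one_closed r_zero add.l_cancel zero_closed)
      thus False using x0 by blast
    qed
    hence "\<one> \<oplus> x \<in> M" using nonunit_in_max[OF loc fin M] x by simp
    hence "(\<one> \<oplus> x) \<ominus> x \<in> M" unfolding a_minus_def using xM
      additive_subgroup.a_closed[OF ideal.axioms(1)[OF maximalideal.axioms(1)[OF M]]]
      additive_subgroup.a_inv_closed[OF ideal.axioms(1)[OF maximalideal.axioms(1)[OF M]]] by blast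
    moreover have "(\<one> \<oplus> x) \<ominus> x = \<one>" using x by (simp add: a_minus_def a_assoc r_neg)
    ultimately have "\<one> \<in> M" by simp
    thus False using ideal.one_imp_carrier[OF maximalideal.axioms(1)[OF M]] maximalideal.I_notcarr[OF M] by blast
  qed
qed

locale tri =
  fixes R1 :: "('a, 'm1) ring_scheme" and R2 :: "('b, 'm2) ring_scheme" and R3 :: "('c, 'm3) ring_scheme"
    and I1 I2 I3
  assumes c1: "cring R1" and c2: "cring R2" and c3: "cring R3"
    and i1: "ideal I1 R1" and i2: "ideal I2 R2" and i3: "ideal I3 R3"
    and p1: "I1 \<noteq> carrier R1" and p2: "I2 \<noteq> carrier R2" and p3: "I3 \<noteq> carrier R3"
begin

abbreviation "RR \<equiv> RDirProd R1 (RDirProd R2 R3)"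
abbreviation "II \<equiv> I1 \<times> I2 \<times> I3"

definition sig :: "'a \<times> 'b \<times> 'c \<Rightarrow> bool \<times> bool \<times> bool" where
  "sig x = (fst x \<notin> I1, fst (snd x) \<notin> I2, snd (snd x) \<notin> I3)"

definition good :: "'a \<times> 'b \<times> 'c \<Rightarrow> bool" where
  "good x \<longleftrightarrow> x \<in> carrier RR \<and> (fst x \<in> I1 \<or> fst x \<in> Units R1) \<and>
     (fst (snd x) \<in> I2 \<or> fst (snd x) \<in> Units R2) \<and> (snd (snd x) \<in> I3 \<or> snd (snd x) \<in> Units R3)"

lemma carrier_RR: "carrier RR = carrier R1 \<times> carrier R2 \<times> carrier R3"
  by (simp add: RDirProd_carrier)

lemma eis_split:
  "(x1, x2, x3) \<in> elt_ideal_sum RR (y1, y2, y3) II \<longleftrightarrow>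
     (\<exists>r\<in>carrier R1. \<exists>i\<in>I1. x1 = y1 \<otimes>\<^bsub>R1\<^esub> r \<oplus>\<^bsub>R1\<^esub> i) \<and>
     (\<exists>r\<in>carrier R2. \<exists>i\<in>I2. x2 = y2 \<otimes>\<^bsub>R2\<^esub> r \<oplus>\<^bsub>R2\<^esub> i) \<and>
     (\<exists>r\<in>carrier R3. \<exists>i\<in>I3. x3 = y3 \<otimes>\<^bsub>R3\<^esub> r \<oplus>\<^bsub>R3\<^esub> i)"
proof
  assume "(x1, x2, x3) \<in> elt_ideal_sum RR (y1, y2, y3) II"
  then obtain r i where "r \<in> carrier RR" "i \<in> II" "(x1, x2, x3) = (y1, y2, y3) \<otimes>\<^bsub>RR\<^esub> r \<oplus>\<^bsub>RR\<^esub> i"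
    unfolding elt_ideal_sum_def by blast
  thus "(\<exists>r\<in>carrier R1. \<exists>i\<in>I1. x1 = y1 \<otimes>\<^bsub>R1\<^esub> r \<oplus>\<^bsub>R1\<^esub> i) \<and>
     (\<exists>r\<in>carrier R2. \<exists>i\<in>I2. x2 = y2 \<otimes>\<^bsub>R2\<^esub> r \<oplus>\<^bsub>R2\<^esub> i) \<and>
     (\<exists>r\<in>carrier R3. \<exists>i\<in>I3. x3 = y3 \<otimes>\<^bsub>R3\<^esub> r \<oplus>\<^bsub>R3\<^esub> i)"
    by (cases r; cases i) (auto simp: RDP_simps carrier_RR)
next
  assume "(\<exists>r\<in>carrier R1. \<exists>i\<in>I1. x1 = y1 \<otimes>\<^bsub>R1\<^esub> r \<oplus>\<^bsub>R1\<^esub> i) \<and>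
     (\<exists>r\<in>carrier R2. \<exists>i\<in>I2. x2 = y2 \<otimes>\<^bsub>R2\<^esub> r \<oplus>\<^bsub>R2\<^esub> i) \<and>
     (\<exists>r\<in>carrier R3. \<exists>i\<in>I3. x3 = y3 \<otimes>\<^bsub>R3\<^esub> r \<oplus>\<^bsub>R3\<^esub> i)"
  then obtain r1 j1 r2 j2 r3 j3 where
    "r1 \<in> carrier R1" "j1 \<in> I1" "x1 = y1 \<otimes>\<^bsub>R1\<^esub> r1 \<oplus>\<^bsub>R1\<^esub> j1"
    "r2 \<in> carrier R2" "j2 \<in> I2" "x2 = y2 \<otimes>\<^bsub>R2\<^esub> r2 \<oplus>\<^bsub>R2\<^esub> j2"
    "r3 \<in> carrier R3" "j3 \<in> I3" "x3 = y3 \<otimes>\<^bsub>R3\<^esub> r3 \<oplus>\<^bsub>R3\<^esub> j3" by blast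
  hence "(r1,r2,r3) \<in> carrier RR" "(j1,j2,j3) \<in> II"
    "(x1, x2, x3) = (y1, y2, y3) \<otimes>\<^bsub>RR\<^esub> (r1,r2,r3) \<oplus>\<^bsub>RR\<^esub> (j1,j2,j3)"
    by (auto simp: RDP_simps carrier_RR)
  thus "(x1, x2, x3) \<in> elt_ideal_sum RR (y1, y2, y3) II" unfolding elt_ideal_sum_def by blast
qed

lemma eis_iff:
  assumes x: "x \<in> carrier RR" and y: "good y"
  shows "x \<in> elt_ideal_sum RR y II \<longleftrightarrow> le3 (sig x) (sig y)"
proof -
  obtain x1 x2 x3 where xx: "x = (x1,x2,x3)" by (cases x) auto
  obtain y1 y2 y3 where yy: "y = (y1,y2,y3)" by (cases y) auto
  have xc: "x1 \<in> carrier R1" "x2 \<in> carrier R2" "x3 \<in> carrier R3" using x xx carrier_RR by auto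
  have yc: "y1 \<in> carrier R1" "y2 \<in> carrier R2" "y3 \<in> carrier R3" using y yy carrier_RR good_def by auto
  have yg: "y1 \<in> I1 \<or> y1 \<in> Units R1" "y2 \<in> I2 \<or> y2 \<in> Units R2" "y3 \<in> I3 \<or> y3 \<in> Units R3"
    using y yy good_def by auto
  show ?thesis
    unfolding xx yy eis_split
    using cring.coord_sum[OF c1 i1 xc(1) yc(1) yg(1)] cring.coord_sum[OF c2 i2 xc(2) yc(2) yg(2)]
      cring.coord_sum[OF c3 i3 xc(3) yc(3) yg(3)]
    by (simp add: sig_def le3_def)
qed

end

lemma S6L_iff: "p \<in> set S6L \<longleftrightarrow> p \<noteq> (False,False,False) \<and> p \<noteq> (True,True,True)"
proof -
  obtain a b c where "p = (a,b,c)" by (cases p) auto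
  thus ?thesis by (cases a; cases b; cases c) (simp_all add: S6L_def)
qed

context tri begin

lemma ring_RR: "ring RR"
  using c1 c2 c3 by (intro RDirProd_ring) (auto simp: cring.axioms(1))

lemma Ik_sub: "I1 \<subseteq> carrier R1" "I2 \<subseteq> carrier R2" "I3 \<subseteq> carrier R3"
  using i1 i2 i3 ideal.axioms(1) additive_subgroup.a_subset by blast+

lemma one_notin: "\<one>\<^bsub>R1\<^esub> \<notin> I1" "\<one>\<^bsub>R2\<^esub> \<notin> I2" "\<one>\<^bsub>R3\<^esub> \<notin> I3"
  using ideal.one_imp_carrier[OF i1] ideal.one_imp_carrier[OF i2] ideal.one_imp_carrier[OF i3] p1 p2 p3 by blast+

lemma one_RR: "\<one>\<^bsub>RR\<^esub> = (\<one>\<^bsub>R1\<^esub>, \<one>\<^bsub>R2\<^esub>, \<one>\<^bsub>R3\<^esub>)" by (simp add: RDP_simps)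

lemma good_carrier: "good x \<Longrightarrow> x \<in> carrier RR" by (simp add: good_def)

lemma eis_sub: "elt_ideal_sum RR x II \<subseteq> carrier RR" if "x \<in> carrier RR"
proof
  fix z assume "z \<in> elt_ideal_sum RR x II"
  then obtain r i where "r \<in> carrier RR" "i \<in> II" "z = x \<otimes>\<^bsub>RR\<^esub> r \<oplus>\<^bsub>RR\<^esub> i" unfolding elt_ideal_sum_def by blast
  moreover have "i \<in> carrier RR" using \<open>i \<in> II\<close> Ik_sub carrier_RR by auto
  ultimately show "z \<in> carrier RR" using that ring.ring_simprules(1,5)[OF ring_RR] by metis
qed

lemma verts_iff:
  assumes x: "good x"
  shows "x \<in> gamma2_verts RR II \<longleftrightarrow> sig x \<in> set S6L"
proof -
  have xc: "x \<in> carrier RR" using x good_def by simp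
  have a: "x \<notin> II \<longleftrightarrow> sig x \<noteq> (False,False,False)" by (cases x) (auto simp: sig_def)
  have oc: "\<one>\<^bsub>RR\<^esub> \<in> carrier RR" using ring.ring_simprules(6)[OF ring_RR] .
  have so: "sig \<one>\<^bsub>RR\<^esub> = (True,True,True)" using one_notin by (simp add: one_RR sig_def)
  have b: "elt_ideal_sum RR x II \<noteq> carrier RR \<longleftrightarrow> sig x \<noteq> (True,True,True)"
  proof
    assume h: "elt_ideal_sum RR x II \<noteq> carrier RR"
    show "sig x \<noteq> (True,True,True)"
    proof
      assume st: "sig x = (True,True,True)"
      have "carrier RR \<subseteq> elt_ideal_sum RR x II"
      proof
        fix z assume "z \<in> carrier RR"
        thus "z \<in> elt_ideal_sum RR x II" using eis_iff[OF _ x] st by (cases "sig z") (simp add: le3_def)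
      qed
      thus False using h eis_sub[OF xc] by blast
    qed
  next
    assume "sig x \<noteq> (True,True,True)"
    hence "\<one>\<^bsub>RR\<^esub> \<notin> elt_ideal_sum RR x II" using eis_iff[OF oc x] so
      by (cases "sig x") (auto simp: le3_def)
    thus "elt_ideal_sum RR x II \<noteq> carrier RR" using oc by blast
  qed
  show ?thesis unfolding gamma2_verts_def S6L_iff using a b xc by blast
qed

lemma adj_iff:
  assumes x: "good x" and y: "good y"
  shows "gamma2_adj RR II x y \<longleftrightarrow> x \<noteq> y \<and> inc3 (sig x) (sig y)"
  unfolding gamma2_adj_def inc3_def
  using eis_iff[OF good_carrier[OF x] y] eis_iff[OF good_carrier[OF y] x] by blast

lemma K33_gen:
  assumes g: "good l1" "good l2" "good l3" "good r1" "good r2" "good r3"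
    and s: "sig l1 \<in> set S6L" "sig l2 \<in> set S6L" "sig l3 \<in> set S6L"
      "sig r1 \<in> set S6L" "sig r2 \<in> set S6L" "sig r3 \<in> set S6L"
    and inc: "inc3 (sig l1) (sig r1)" "inc3 (sig l1) (sig r2)" "inc3 (sig l1) (sig r3)"
      "inc3 (sig l2) (sig r1)" "inc3 (sig l2) (sig r2)" "inc3 (sig l2) (sig r3)"
      "inc3 (sig l3) (sig r1)" "inc3 (sig l3) (sig r2)" "inc3 (sig l3) (sig r3)"
    and ds: "sig l1 \<noteq> sig l2" "sig l1 \<noteq> sig l3" "sig r1 \<noteq> sig r2" "sig r1 \<noteq> sig r3"
    and dd: "l2 \<noteq> l3" "r2 \<noteq> r3"
  shows "\<not> planar_graph (gamma2_verts RR II) (gamma2_adj RR II)"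
proof
  assume P: "planar_graph (gamma2_verts RR II) (gamma2_adj RR II)"
  have D: "distinct [l1,l2,l3,r1,r2,r3]"
    using ds dd inc3_neq[OF inc(1)] inc3_neq[OF inc(2)] inc3_neq[OF inc(3)] inc3_neq[OF inc(4)]
      inc3_neq[OF inc(5)] inc3_neq[OF inc(6)] inc3_neq[OF inc(7)] inc3_neq[OF inc(8)] inc3_neq[OF inc(9)]
    by auto
  show False
    apply (rule K33_nonplanar[OF P _ _ _ _ _ _ D])
    using verts_iff[OF g(1)] verts_iff[OF g(2)] verts_iff[OF g(3)] verts_iff[OF g(4)]
      verts_iff[OF g(5)] verts_iff[OF g(6)] s apply simp_all
    using adj_iff g inc D by simp_all
qed

lemma planar_if:
  assumes allg: "\<And>x. x \<in> carrier RR \<Longrightarrow> good x" and inj: "inj_on sig (carrier RR)"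
  shows "planar_graph (gamma2_verts RR II) (gamma2_adj RR II)"
proof (rule prism_planar[where s = sig])
  have sub: "gamma2_verts RR II \<subseteq> carrier RR" unfolding gamma2_verts_def by blast
  show "inj_on sig (gamma2_verts RR II)" using inj_on_subset[OF inj sub] .
  show "sig ` gamma2_verts RR II \<subseteq> set S6L" using verts_iff allg sub by blast
  fix x y assume "x \<in> gamma2_verts RR II" "y \<in> gamma2_verts RR II" "gamma2_adj RR II x y"
  thus "inc3 (sig x) (sig y)" using adj_iff allg sub by blast
qed

end

lemma ZFact2_carrier: "carrier (ZFact 2) = {\<zero>\<^bsub>ZFact 2\<^esub>, \<one>\<^bsub>ZFact 2\<^esub>}"
proof -
  interpret I: ideal "Idl\<^bsub>\<Z>\<^esub> {2}" \<Z> by (rule int.genideal_ideal) fast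
  have c: "carrier (ZFact 2) = range (ZMod 2)"
    unfolding ZFact_def FactRing_def A_RCOSETS_defs ZMod_def a_r_coset_def by auto
  have z: "\<zero>\<^bsub>ZFact 2\<^esub> = ZMod 2 0" unfolding ZFact_def FactRing_def ZMod_def
    using int.a_coset_add_zero[of "Idl\<^bsub>\<Z>\<^esub> {2}"] by simp
  have o: "\<one>\<^bsub>ZFact 2\<^esub> = ZMod 2 1" unfolding ZFact_def FactRing_def ZMod_def by simp
  have "ZMod 2 a \<in> {ZMod 2 0, ZMod 2 1}" for a :: int
  proof -
    have e: "ZMod 2 a = ZMod 2 (a mod 2)" by (rule ZMod_mod)
    have "a mod 2 = 0 \<or> a mod 2 = 1" by presburger
    thus ?thesis by (elim disjE) (simp_all only: e insert_iff refl simp_thms)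
  qed
  thus ?thesis using c z o by auto
qed

lemma ZFact2_nontriv: "\<zero>\<^bsub>ZFact 2\<^esub> \<noteq> \<one>\<^bsub>ZFact 2\<^esub>"
  using domain.one_not_zero[OF ZFact_prime_is_domain[of 2]] by auto

lemma (in ring) two_table:
  assumes "carrier R = {\<zero>, \<one>}" "\<zero> \<noteq> \<one>"
  shows "\<one> \<oplus> \<one> = \<zero>"
proof -
  have "\<one> \<oplus> \<one> \<in> {\<zero>, \<one>}" using assms(1) by (metis add.m_closed one_closed)
  moreover have "\<one> \<oplus> \<one> \<noteq> \<one>"
  proof
    assume "\<one> \<oplus> \<one> = \<one>"
    hence "\<one> \<oplus> \<one> = \<one> \<oplus> \<zero>" by simp
    hence "\<one> = \<zero>" using add.l_cancel one_closed zero_closed by blast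
    thus False using assms(2) by simp
  qed
  ultimately show ?thesis by blast
qed

lemma two_iso:
  assumes A: "ring A" and B: "ring B" and cA: "carrier A = {\<zero>\<^bsub>A\<^esub>, \<one>\<^bsub>A\<^esub>}"
    and cB: "carrier B = {\<zero>\<^bsub>B\<^esub>, \<one>\<^bsub>B\<^esub>}"
    and nA: "\<zero>\<^bsub>A\<^esub> \<noteq> \<one>\<^bsub>A\<^esub>" and nB: "\<zero>\<^bsub>B\<^esub> \<noteq> \<one>\<^bsub>B\<^esub>"
  shows "(\<lambda>x. if x = \<one>\<^bsub>A\<^esub> then \<one>\<^bsub>B\<^esub> else \<zero>\<^bsub>B\<^esub>) \<in> ring_iso A B"
proof -
  let ?h = "\<lambda>x. if x = \<one>\<^bsub>A\<^esub> then \<one>\<^bsub>B\<^esub> else \<zero>\<^bsub>B\<^esub>"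
  have tA: "\<one>\<^bsub>A\<^esub> \<oplus>\<^bsub>A\<^esub> \<one>\<^bsub>A\<^esub> = \<zero>\<^bsub>A\<^esub>" using ring.two_table[OF A cA nA] .
  have tB: "\<one>\<^bsub>B\<^esub> \<oplus>\<^bsub>B\<^esub> \<one>\<^bsub>B\<^esub> = \<zero>\<^bsub>B\<^esub>" using ring.two_table[OF B cB nB] .
  have hom: "?h \<in> ring_hom A B"
  proof (rule ring_hom_memI)
    fix x assume "x \<in> carrier A" thus "?h x \<in> carrier B" using cB by auto
  next
    fix x y assume "x \<in> carrier A" "y \<in> carrier A"
    hence "x = \<zero>\<^bsub>A\<^esub> \<or> x = \<one>\<^bsub>A\<^esub>" "y = \<zero>\<^bsub>A\<^esub> \<or> y = \<one>\<^bsub>A\<^esub>" using cA by auto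
    thus "?h (x \<otimes>\<^bsub>A\<^esub> y) = ?h x \<otimes>\<^bsub>B\<^esub> ?h y" "?h (x \<oplus>\<^bsub>A\<^esub> y) = ?h x \<oplus>\<^bsub>B\<^esub> ?h y"
      using nA nB tA tB A B by (auto simp: ring.ring_simprules)
  next
    show "?h \<one>\<^bsub>A\<^esub> = \<one>\<^bsub>B\<^esub>" by simp
  qed
  have "bij_betw ?h (carrier A) (carrier B)"
    unfolding bij_betw_def inj_on_def using cA cB nA nB by auto
  thus ?thesis using hom unfolding ring_iso_def by blast
qed

context tri begin

lemma zero_in: "\<zero>\<^bsub>R1\<^esub> \<in> I1" "\<zero>\<^bsub>R2\<^esub> \<in> I2" "\<zero>\<^bsub>R3\<^esub> \<in> I3"
  using additive_subgroup.zero_closed[OF ideal.axioms(1)[OF i1]]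
    additive_subgroup.zero_closed[OF ideal.axioms(1)[OF i2]]
    additive_subgroup.zero_closed[OF ideal.axioms(1)[OF i3]] by auto

lemma one_units: "\<one>\<^bsub>R1\<^esub> \<in> Units R1" "\<one>\<^bsub>R2\<^esub> \<in> Units R2" "\<one>\<^bsub>R3\<^esub> \<in> Units R3"
  using c1 c2 c3 by (simp_all add: cring.axioms(1) ring.axioms(2) monoid.Units_one_closed)

lemma zero_ne_one: "\<zero>\<^bsub>R1\<^esub> \<noteq> \<one>\<^bsub>R1\<^esub>" "\<zero>\<^bsub>R2\<^esub> \<noteq> \<one>\<^bsub>R2\<^esub>" "\<zero>\<^bsub>R3\<^esub> \<noteq> \<one>\<^bsub>R3\<^esub>"
  using zero_in one_notin by metis+

lemma units_notin: "u \<in> Units R1 \<Longrightarrow> u \<notin> I1" "v \<in> Units R2 \<Longrightarrow> v \<notin> I2" "w \<in> Units R3 \<Longrightarrow> w \<notin> I3"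
  using ideal.unit_not_in[OF i1 p1] ideal.unit_not_in[OF i2 p2] ideal.unit_not_in[OF i3 p3] by blast+

lemma good_I:
  assumes "a \<in> I1 \<or> a \<in> Units R1" "b \<in> I2 \<or> b \<in> Units R2" "c \<in> I3 \<or> c \<in> Units R3"
  shows "good (a,b,c)"
  using assms Ik_sub unfolding good_def carrier_RR by (auto simp: Units_def)

lemmas facts = zero_in one_units one_notin zero_ne_one zero_ne_one[symmetric]

lemma caseB1:
  assumes u: "u \<in> Units R1" "u \<noteq> \<one>\<^bsub>R1\<^esub>"
  shows "\<not> planar_graph (gamma2_verts RR II) (gamma2_adj RR II)"
proof -
  have "u \<notin> I1" "u \<noteq> \<zero>\<^bsub>R1\<^esub>" using units_notin(1)[OF u(1)] zero_in by auto
  thus ?thesis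
    apply (intro K33_gen[of "(\<zero>\<^bsub>R1\<^esub>,\<one>\<^bsub>R2\<^esub>,\<zero>\<^bsub>R3\<^esub>)" "(\<one>\<^bsub>R1\<^esub>,\<one>\<^bsub>R2\<^esub>,\<zero>\<^bsub>R3\<^esub>)" "(u,\<one>\<^bsub>R2\<^esub>,\<zero>\<^bsub>R3\<^esub>)"
       "(\<zero>\<^bsub>R1\<^esub>,\<zero>\<^bsub>R2\<^esub>,\<one>\<^bsub>R3\<^esub>)" "(\<one>\<^bsub>R1\<^esub>,\<zero>\<^bsub>R2\<^esub>,\<one>\<^bsub>R3\<^esub>)" "(u,\<zero>\<^bsub>R2\<^esub>,\<one>\<^bsub>R3\<^esub>)"])
    using u facts by (simp_all add: good_I sig_def inc3_def le3_def S6L_def)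
qed

lemma caseB2:
  assumes u: "u \<in> Units R2" "u \<noteq> \<one>\<^bsub>R2\<^esub>"
  shows "\<not> planar_graph (gamma2_verts RR II) (gamma2_adj RR II)"
proof -
  have "u \<notin> I2" "u \<noteq> \<zero>\<^bsub>R2\<^esub>" using units_notin(2)[OF u(1)] zero_in by auto
  thus ?thesis
    apply (intro K33_gen[of "(\<one>\<^bsub>R1\<^esub>,\<zero>\<^bsub>R2\<^esub>,\<zero>\<^bsub>R3\<^esub>)" "(\<one>\<^bsub>R1\<^esub>,\<one>\<^bsub>R2\<^esub>,\<zero>\<^bsub>R3\<^esub>)" "(\<one>\<^bsub>R1\<^esub>,u,\<zero>\<^bsub>R3\<^esub>)"
       "(\<zero>\<^bsub>R1\<^esub>,\<zero>\<^bsub>R2\<^esub>,\<one>\<^bsub>R3\<^esub>)" "(\<zero>\<^bsub>R1\<^esub>,\<one>\<^bsub>R2\<^esub>,\<one>\<^bsub>R3\<^esub>)" "(\<zero>\<^bsub>R1\<^esub>,u,\<one>\<^bsub>R3\<^esub>)"])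
    using u facts by (simp_all add: good_I sig_def inc3_def le3_def S6L_def)
qed

lemma caseB3:
  assumes u: "u \<in> Units R3" "u \<noteq> \<one>\<^bsub>R3\<^esub>"
  shows "\<not> planar_graph (gamma2_verts RR II) (gamma2_adj RR II)"
proof -
  have "u \<notin> I3" "u \<noteq> \<zero>\<^bsub>R3\<^esub>" using units_notin(3)[OF u(1)] zero_in by auto
  thus ?thesis
    apply (intro K33_gen[of "(\<one>\<^bsub>R1\<^esub>,\<zero>\<^bsub>R2\<^esub>,\<zero>\<^bsub>R3\<^esub>)" "(\<one>\<^bsub>R1\<^esub>,\<zero>\<^bsub>R2\<^esub>,\<one>\<^bsub>R3\<^esub>)" "(\<one>\<^bsub>R1\<^esub>,\<zero>\<^bsub>R2\<^esub>,u)"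
       "(\<zero>\<^bsub>R1\<^esub>,\<one>\<^bsub>R2\<^esub>,\<zero>\<^bsub>R3\<^esub>)" "(\<zero>\<^bsub>R1\<^esub>,\<one>\<^bsub>R2\<^esub>,\<one>\<^bsub>R3\<^esub>)" "(\<zero>\<^bsub>R1\<^esub>,\<one>\<^bsub>R2\<^esub>,u)"])
    using u facts by (simp_all add: good_I sig_def inc3_def le3_def S6L_def)
qed

end

lemma (in ring) one_add_eq_one: "j \<in> carrier R \<Longrightarrow> \<one> \<oplus> j = \<one> \<longleftrightarrow> j = \<zero>"
  by (metis add.l_cancel one_closed r_zero zero_closed)

context tri begin

lemma caseA:
  assumes j: "j1 \<in> I1" "j2 \<in> I2" "j3 \<in> I3" "(j1,j2,j3) \<noteq> (\<zero>\<^bsub>R1\<^esub>,\<zero>\<^bsub>R2\<^esub>,\<zero>\<^bsub>R3\<^esub>)"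
    and UA1: "\<one>\<^bsub>R1\<^esub> \<oplus>\<^bsub>R1\<^esub> j1 \<in> Units R1"
    and UA2: "\<one>\<^bsub>R2\<^esub> \<oplus>\<^bsub>R2\<^esub> j2 \<in> Units R2"
    and UA3: "\<one>\<^bsub>R3\<^esub> \<oplus>\<^bsub>R3\<^esub> j3 \<in> Units R3"
  shows "\<not> planar_graph (gamma2_verts RR II) (gamma2_adj RR II)"
proof -
  have n: "\<one>\<^bsub>R1\<^esub> \<oplus>\<^bsub>R1\<^esub> j1 \<notin> I1" "\<one>\<^bsub>R2\<^esub> \<oplus>\<^bsub>R2\<^esub> j2 \<notin> I2" "\<one>\<^bsub>R3\<^esub> \<oplus>\<^bsub>R3\<^esub> j3 \<notin> I3"
    using units_notin UA1 UA2 UA3 by blast+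
  have e: "\<one>\<^bsub>R1\<^esub> \<oplus>\<^bsub>R1\<^esub> j1 = \<one>\<^bsub>R1\<^esub> \<longleftrightarrow> j1 = \<zero>\<^bsub>R1\<^esub>"
    "\<one>\<^bsub>R2\<^esub> \<oplus>\<^bsub>R2\<^esub> j2 = \<one>\<^bsub>R2\<^esub> \<longleftrightarrow> j2 = \<zero>\<^bsub>R2\<^esub>"
    "\<one>\<^bsub>R3\<^esub> \<oplus>\<^bsub>R3\<^esub> j3 = \<one>\<^bsub>R3\<^esub> \<longleftrightarrow> j3 = \<zero>\<^bsub>R3\<^esub>"
    using ring.one_add_eq_one[OF cring.axioms(1)[OF c1]] ring.one_add_eq_one[OF cring.axioms(1)[OF c2]]
      ring.one_add_eq_one[OF cring.axioms(1)[OF c3]] j(1-3) Ik_sub by blast+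
  have d: "(\<one>\<^bsub>R1\<^esub> \<oplus>\<^bsub>R1\<^esub> j1, \<one>\<^bsub>R2\<^esub> \<oplus>\<^bsub>R2\<^esub> j2, j3) \<noteq> (\<one>\<^bsub>R1\<^esub>,\<one>\<^bsub>R2\<^esub>,\<zero>\<^bsub>R3\<^esub>)"
    "(\<one>\<^bsub>R1\<^esub> \<oplus>\<^bsub>R1\<^esub> j1, j2, \<one>\<^bsub>R3\<^esub> \<oplus>\<^bsub>R3\<^esub> j3) \<noteq> (\<one>\<^bsub>R1\<^esub>,\<zero>\<^bsub>R2\<^esub>,\<one>\<^bsub>R3\<^esub>)"
    using e j(4) by auto
  show ?thesis
    apply (intro K33_gen[of "(\<zero>\<^bsub>R1\<^esub>,\<one>\<^bsub>R2\<^esub>,\<zero>\<^bsub>R3\<^esub>)" "(\<one>\<^bsub>R1\<^esub>,\<one>\<^bsub>R2\<^esub>,\<zero>\<^bsub>R3\<^esub>)"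
       "(\<one>\<^bsub>R1\<^esub> \<oplus>\<^bsub>R1\<^esub> j1, \<one>\<^bsub>R2\<^esub> \<oplus>\<^bsub>R2\<^esub> j2, j3)"
       "(\<zero>\<^bsub>R1\<^esub>,\<zero>\<^bsub>R2\<^esub>,\<one>\<^bsub>R3\<^esub>)" "(\<one>\<^bsub>R1\<^esub>,\<zero>\<^bsub>R2\<^esub>,\<one>\<^bsub>R3\<^esub>)"
       "(\<one>\<^bsub>R1\<^esub> \<oplus>\<^bsub>R1\<^esub> j1, j2, \<one>\<^bsub>R3\<^esub> \<oplus>\<^bsub>R3\<^esub> j3)"])
    using UA1 UA2 UA3 n j(1-3) d d(1)[symmetric] d(2)[symmetric] facts by (simp_all add: good_I sig_def inc3_def le3_def S6L_def)
qed

end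

lemma eight_lemma:
  fixes a b c :: nat
  assumes "a * b * c = 8" "2 \<le> a" "2 \<le> b" "2 \<le> c"
  shows "a = 2" "b = 2" "c = 2"
proof -
  have "2 * 2 \<le> b * c" "2 * 2 \<le> a * c" "2 * 2 \<le> a * b" using assms(2-4) mult_le_mono by blast+
  hence "a * 4 \<le> a * (b * c)" "b * 4 \<le> b * (a * c)" "c * 4 \<le> c * (a * b)" by simp_all
  moreover have "a * (b * c) = 8" "b * (a * c) = 8" "c * (a * b) = 8" using assms(1)
    by (simp_all add: mult.assoc mult.left_commute mult.commute)
  ultimately show "a = 2" "b = 2" "c = 2" using assms(2-4) by linarith+
qed

lemma card2_carrier:
  assumes "finite C" "card C = 2" "z \<in> C" "w \<in> C" "z \<noteq> w"
  shows "C = {z, w}"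
proof -
  have "{z, w} \<subseteq> C" "card {z, w} = card C" using assms by auto
  thus ?thesis using card_subset_eq[OF assms(1)] by metis
qed

theorem corollary3p7:
  fixes R1 :: "'a ring" and R2 :: "'b ring" and R3 :: "'c ring"
    and I1 :: "'a set" and I2 :: "'b set" and I3 :: "'c set"
  assumes "local_ring R1" "local_ring R2" "local_ring R3"
    and "finite (carrier R1)" "finite (carrier R2)" "finite (carrier R3)"
    and "ideal I1 R1" "I1 \<noteq> carrier R1"
    and "ideal I2 R2" "I2 \<noteq> carrier R2"
    and "ideal I3 R3" "I3 \<noteq> carrier R3"
  shows "planar_graph
           (gamma2_verts (RDirProd R1 (RDirProd R2 R3)) (I1 \<times> I2 \<times> I3))
           (gamma2_adj (RDirProd R1 (RDirProd R2 R3)) (I1 \<times> I2 \<times> I3))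
         \<longleftrightarrow> RDirProd R1 (RDirProd R2 R3) \<simeq> RDirProd (ZFact 2) (RDirProd (ZFact 2) (ZFact 2))"
proof -
  have cr: "cring R1" "cring R2" "cring R3" using assms(1-3) unfolding local_ring_def by auto
  have rg: "ring R1" "ring R2" "ring R3" using cr cring.axioms(1) by blast+
  interpret T: tri R1 R2 R3 I1 I2 I3
    by (rule tri.intro) (use cr assms(7-12) in auto)
  have Zr: "ring (ZFact 2)" using ZFact_is_cring cring.axioms(1) by blast
  have z1: "\<zero>\<^bsub>R1\<^esub> \<in> carrier R1" "\<one>\<^bsub>R1\<^esub> \<in> carrier R1" using rg(1) ring.ring_simprules(2,6) by blast+
  have z2: "\<zero>\<^bsub>R2\<^esub> \<in> carrier R2" "\<one>\<^bsub>R2\<^esub> \<in> carrier R2" using rg(2) ring.ring_simprules(2,6) by blast+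
  have z3: "\<zero>\<^bsub>R3\<^esub> \<in> carrier R3" "\<one>\<^bsub>R3\<^esub> \<in> carrier R3" using rg(3) ring.ring_simprules(2,6) by blast+
  show ?thesis
  proof
    assume P: "planar_graph (gamma2_verts T.RR T.II) (gamma2_adj T.RR T.II)"
    have I1z: "I1 = {\<zero>\<^bsub>R1\<^esub>}"
    proof (rule ccontr)
      assume "I1 \<noteq> {\<zero>\<^bsub>R1\<^esub>}"
      then obtain j where j: "j \<in> I1" "j \<noteq> \<zero>\<^bsub>R1\<^esub>" using T.zero_in by blast
      have "\<not> planar_graph (gamma2_verts T.RR T.II) (gamma2_adj T.RR T.II)"
        apply (rule T.caseA[of j "\<zero>\<^bsub>R2\<^esub>" "\<zero>\<^bsub>R3\<^esub>"])
        using j T.zero_in apply simp_all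
        using cring.local_unit_add[OF cr(1) assms(1,4,7,8) T.one_units(1) j(1)]
          cring.local_unit_add[OF cr(2) assms(2,5,9,10) T.one_units(2) T.zero_in(2)]
          cring.local_unit_add[OF cr(3) assms(3,6,11,12) T.one_units(3) T.zero_in(3)] by simp_all
      thus False using P by blast
    qed
    have I2z: "I2 = {\<zero>\<^bsub>R2\<^esub>}"
    proof (rule ccontr)
      assume "I2 \<noteq> {\<zero>\<^bsub>R2\<^esub>}"
      then obtain j where j: "j \<in> I2" "j \<noteq> \<zero>\<^bsub>R2\<^esub>" using T.zero_in by blast
      have "\<not> planar_graph (gamma2_verts T.RR T.II) (gamma2_adj T.RR T.II)"
        apply (rule T.caseA[of "\<zero>\<^bsub>R1\<^esub>" j "\<zero>\<^bsub>R3\<^esub>"])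
        using j T.zero_in apply simp_all
        using cring.local_unit_add[OF cr(1) assms(1,4,7,8) T.one_units(1) T.zero_in(1)]
          cring.local_unit_add[OF cr(2) assms(2,5,9,10) T.one_units(2) j(1)]
          cring.local_unit_add[OF cr(3) assms(3,6,11,12) T.one_units(3) T.zero_in(3)] by simp_all
      thus False using P by blast
    qed
    have I3z: "I3 = {\<zero>\<^bsub>R3\<^esub>}"
    proof (rule ccontr)
      assume "I3 \<noteq> {\<zero>\<^bsub>R3\<^esub>}"
      then obtain j where j: "j \<in> I3" "j \<noteq> \<zero>\<^bsub>R3\<^esub>" using T.zero_in by blast
      have "\<not> planar_graph (gamma2_verts T.RR T.II) (gamma2_adj T.RR T.II)"
        apply (rule T.caseA[of "\<zero>\<^bsub>R1\<^esub>" "\<zero>\<^bsub>R2\<^esub>" j])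
        using j T.zero_in apply simp_all
        using cring.local_unit_add[OF cr(1) assms(1,4,7,8) T.one_units(1) T.zero_in(1)]
          cring.local_unit_add[OF cr(2) assms(2,5,9,10) T.one_units(2) T.zero_in(2)]
          cring.local_unit_add[OF cr(3) assms(3,6,11,12) T.one_units(3) j(1)] by simp_all
      thus False using P by blast
    qed
    have U1: "Units R1 = {\<one>\<^bsub>R1\<^esub>}" using T.caseB1 P T.one_units(1) by blast
    have U2: "Units R2 = {\<one>\<^bsub>R2\<^esub>}" using T.caseB2 P T.one_units(2) by blast
    have U3: "Units R3 = {\<one>\<^bsub>R3\<^esub>}" using T.caseB3 P T.one_units(3) by blast
    have C1: "carrier R1 = {\<zero>\<^bsub>R1\<^esub>, \<one>\<^bsub>R1\<^esub>}"
      using cring.local_units_one[OF cr(1) assms(1,4) U1] z1 by blast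
    have C2: "carrier R2 = {\<zero>\<^bsub>R2\<^esub>, \<one>\<^bsub>R2\<^esub>}"
      using cring.local_units_one[OF cr(2) assms(2,5) U2] z2 by blast
    have C3: "carrier R3 = {\<zero>\<^bsub>R3\<^esub>, \<one>\<^bsub>R3\<^esub>}"
      using cring.local_units_one[OF cr(3) assms(3,6) U3] z3 by blast
    have h1: "(\<lambda>x. if x = \<one>\<^bsub>R1\<^esub> then \<one>\<^bsub>ZFact 2\<^esub> else \<zero>\<^bsub>ZFact 2\<^esub>) \<in> ring_iso R1 (ZFact 2)"
      by (rule two_iso[OF rg(1) Zr C1 ZFact2_carrier T.zero_ne_one(1) ZFact2_nontriv])
    have h2: "(\<lambda>x. if x = \<one>\<^bsub>R2\<^esub> then \<one>\<^bsub>ZFact 2\<^esub> else \<zero>\<^bsub>ZFact 2\<^esub>) \<in> ring_iso R2 (ZFact 2)"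
      by (rule two_iso[OF rg(2) Zr C2 ZFact2_carrier T.zero_ne_one(2) ZFact2_nontriv])
    have h3: "(\<lambda>x. if x = \<one>\<^bsub>R3\<^esub> then \<one>\<^bsub>ZFact 2\<^esub> else \<zero>\<^bsub>ZFact 2\<^esub>) \<in> ring_iso R3 (ZFact 2)"
      by (rule two_iso[OF rg(3) Zr C3 ZFact2_carrier T.zero_ne_one(3) ZFact2_nontriv])
    show "T.RR \<simeq> RDirProd (ZFact 2) (RDirProd (ZFact 2) (ZFact 2))"
      unfolding is_ring_iso_def using RDirProd_iso6[OF h1 RDirProd_iso6[OF h2 h3]] by blast
  next
    assume "T.RR \<simeq> RDirProd (ZFact 2) (RDirProd (ZFact 2) (ZFact 2))"
    then obtain h where h: "h \<in> ring_iso T.RR (RDirProd (ZFact 2) (RDirProd (ZFact 2) (ZFact 2)))"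
      unfolding is_ring_iso_def by blast
    hence "bij_betw h (carrier T.RR) (carrier (RDirProd (ZFact 2) (RDirProd (ZFact 2) (ZFact 2))))"
      unfolding ring_iso_def by blast
    hence "card (carrier T.RR) = card (carrier (RDirProd (ZFact 2) (RDirProd (ZFact 2) (ZFact 2))))"
      by (rule bij_betw_same_card)
    moreover have "card (carrier (ZFact 2)) = 2" using ZFact2_carrier ZFact2_nontriv by simp
    ultimately have c8: "card (carrier R1) * card (carrier R2) * card (carrier R3) = 8"
      by (simp add: RDirProd_carrier card_cartesian_product)
    have g2: "2 \<le> card (carrier R1)" "2 \<le> card (carrier R2)" "2 \<le> card (carrier R3)"
    proof -
      have "card {\<zero>\<^bsub>R1\<^esub>, \<one>\<^bsub>R1\<^esub>} \<le> card (carrier R1)" using z1 assms(4) by (intro card_mono) auto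
      thus "2 \<le> card (carrier R1)" using T.zero_ne_one(1) by simp
      have "card {\<zero>\<^bsub>R2\<^esub>, \<one>\<^bsub>R2\<^esub>} \<le> card (carrier R2)" using z2 assms(5) by (intro card_mono) auto
      thus "2 \<le> card (carrier R2)" using T.zero_ne_one(2) by simp
      have "card {\<zero>\<^bsub>R3\<^esub>, \<one>\<^bsub>R3\<^esub>} \<le> card (carrier R3)" using z3 assms(6) by (intro card_mono) auto
      thus "2 \<le> card (carrier R3)" using T.zero_ne_one(3) by simp
    qed
    note e = eight_lemma[OF c8 g2]
    have C1: "carrier R1 = {\<zero>\<^bsub>R1\<^esub>, \<one>\<^bsub>R1\<^esub>}" by (rule card2_carrier[OF assms(4) e(1) z1 T.zero_ne_one(1)])
    have C2: "carrier R2 = {\<zero>\<^bsub>R2\<^esub>, \<one>\<^bsub>R2\<^esub>}" by (rule card2_carrier[OF assms(5) e(2) z2 T.zero_ne_one(2)])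
    have C3: "carrier R3 = {\<zero>\<^bsub>R3\<^esub>, \<one>\<^bsub>R3\<^esub>}" by (rule card2_carrier[OF assms(6) e(3) z3 T.zero_ne_one(3)])
    have I1z: "I1 = {\<zero>\<^bsub>R1\<^esub>}" using T.Ik_sub(1) C1 T.zero_in(1) T.one_notin(1) by auto
    have I2z: "I2 = {\<zero>\<^bsub>R2\<^esub>}" using T.Ik_sub(2) C2 T.zero_in(2) T.one_notin(2) by auto
    have I3z: "I3 = {\<zero>\<^bsub>R3\<^esub>}" using T.Ik_sub(3) C3 T.zero_in(3) T.one_notin(3) by auto
    show "planar_graph (gamma2_verts T.RR T.II) (gamma2_adj T.RR T.II)"
    proof (rule T.planar_if)
      fix x assume "x \<in> carrier T.RR"
      hence "fst x \<in> {\<zero>\<^bsub>R1\<^esub>, \<one>\<^bsub>R1\<^esub>}" "fst (snd x) \<in> {\<zero>\<^bsub>R2\<^esub>, \<one>\<^bsub>R2\<^esub>}" "snd (snd x) \<in> {\<zero>\<^bsub>R3\<^esub>, \<one>\<^bsub>R3\<^esub>}"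
        using C1 C2 C3 T.carrier_RR by auto
      thus "T.good x" using \<open>x \<in> carrier T.RR\<close> T.zero_in T.one_units unfolding T.good_def by auto
    next
      show "inj_on T.sig (carrier T.RR)"
        unfolding inj_on_def T.sig_def T.carrier_RR
        unfolding C1 C2 C3 I1z I2z I3z
        using T.zero_ne_one by auto
    qed
  qed
qed


end
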